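(* Let $(X,d_X)$ and $(\Lambda,d_\Lambda)$ be complete metric spaces and, for each $\lambda\in\Lambda$, let $S_\lambda(\cdot,\cdot)$ be a process on $X$. Assume that for every $s\in\mathbb R$ and $t\ge s$ the map $\lambda\mapsto S_\lambda(t,s)x$ is continuous, uniformly for $x$ in compact subsets of $X$. Let $K\subseteq X$ be compact. Then for any $s\in\mathbb R$ and $t\ge s$ the map $(\lambda,B)\mapsto S_\lambda(t,s)B$ is jointly continuous on $\Lambda\times CB(K)$, where the images are equipped with the Hausdorff distance $\Delta_X$.
   Context: A process on $X$ is a family of maps $S(t,s):X\to X$, $s\in\mathbb R$, $t\ge s$, with $S(t,t)=\mathrm{id}$, $S(t,\tau)S(\tau,s)=S(t,s)$ for $t\ge\tau\ge s$, and $S(t,s)x$ continuous in $(x,t,s)$. $\rho_X(A,C)=\sup_{a\in A}\inf_{c\in C}d_X(a,c)$, $\Delta_X(A,C)=\max(\rho_X(A,C),\rho_X(C,A))$. $CB(K)$ is the set of nonempty closed (hence compact) subsets of $K$ with metric $\Delta_X$. *)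

theory Defs
  imports "HOL-Analysis.Analysis"
begin

definition process :: "(real \<Rightarrow> real \<Rightarrow> 'a::metric_space \<Rightarrow> 'a) \<Rightarrow> bool" where
  "process S \<longleftrightarrow>
     (\<forall>t x. S t t x = x) \<and>
     (\<forall>t \<tau> s x. s \<le> \<tau> \<and> \<tau> \<le> t \<longrightarrow> S t \<tau> (S \<tau> s x) = S t s x) \<and>
     continuous_on {(x, t, s). s \<le> t} (\<lambda>(x, t, s). S t s x)"

definition hrho :: "'a::metric_space set \<Rightarrow> 'a set \<Rightarrow> real" where
  "hrho A C = (SUP a\<in>A. INF c\<in>C. dist a c)"

definition hDelta :: "'a::metric_space set \<Rightarrow> 'a set \<Rightarrow> real" where
  "hDelta A C = max (hrho A C) (hrho C A)"

definition CB :: "'a::metric_space set \<Rightarrow> 'a set set" where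
  "CB K = {B. B \<subseteq> K \<and> B \<noteq> {} \<and> closed B}"

end

theory Submission
  imports Defs
begin

lemma hrho_lt:
  fixes A C K :: "'a::metric_space set"
  assumes "A \<subseteq> K" "C \<subseteq> K" "C \<noteq> {}" "bounded K" "hrho A C < e" "a \<in> A"
  shows "\<exists>c\<in>C. dist a c < e"
proof -
  obtain M where M: "\<forall>x\<in>K. \<forall>y\<in>K. dist x y \<le> M"
    using bounded_two_points assms(4) by blast
  obtain c0 where c0: "c0 \<in> C" using assms(3) by blast
  have bb: "bdd_below ((\<lambda>c. dist x c) ` C)" for x
    by (rule bdd_belowI[of _ 0]) auto
  have "(INF c\<in>C. dist x c) \<le> M" if "x \<in> A" for x
  proof -
    have "(INF c\<in>C. dist x c) \<le> dist x c0" by (rule cINF_lower[OF bb c0])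
    also have "\<dots> \<le> M" using M that c0 assms(1,2) by blast
    finally show ?thesis .
  qed
  hence ba: "bdd_above ((\<lambda>x. INF c\<in>C. dist x c) ` A)"
    by (intro bdd_aboveI[of _ M]) auto
  have "(INF c\<in>C. dist a c) \<le> hrho A C"
    unfolding hrho_def by (rule cSUP_upper[OF assms(6) ba])
  with assms(5) have "(INF c\<in>C. dist a c) < e" by linarith
  thus ?thesis using cINF_less_iff[OF assms(3) bb] by auto
qed

lemma hrho_le:
  fixes A C :: "'a::metric_space set"
  assumes "A \<noteq> {}" "\<forall>a\<in>A. \<exists>c\<in>C. dist a c < e"
  shows "hrho A C \<le> e"
  unfolding hrho_def
proof (rule cSUP_least[OF assms(1)])
  fix a assume a: "a \<in> A"
  then obtain c where c: "c \<in> C" "dist a c < e" using assms(2) by blast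
  have bb: "bdd_below ((\<lambda>c. dist a c) ` C)"
    by (rule bdd_belowI[of _ 0]) auto
  have "(INF c\<in>C. dist a c) \<le> dist a c" by (rule cINF_lower[OF bb c(1)])
  thus "(INF c\<in>C. dist a c) \<le> e" using c(2) by linarith
qed

theorem lemma3p2:
  fixes S :: "'l::complete_space \<Rightarrow> real \<Rightarrow> real \<Rightarrow> 'a::complete_space \<Rightarrow> 'a"
    and K :: "'a set"
  assumes proc: "\<And>l. process (S l)"
    and unif: "\<And>s t C l0 \<epsilon>. s \<le> t \<Longrightarrow> compact C \<Longrightarrow> \<epsilon> > 0 \<Longrightarrow>
                 \<exists>\<delta>>0. \<forall>l. dist l l0 < \<delta> \<longrightarrow>
                        (\<forall>x\<in>C. dist (S l t s x) (S l0 t s x) < \<epsilon>)"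
    and K: "compact K"
  shows "\<forall>s t. s \<le> t \<longrightarrow>
           (\<forall>l0 B0 \<epsilon>. B0 \<in> CB K \<and> \<epsilon> > 0 \<longrightarrow>
              (\<exists>\<delta>>0. \<forall>l B. B \<in> CB K \<and> dist l l0 < \<delta> \<and> hDelta B B0 < \<delta> \<longrightarrow>
                  hDelta (S l t s ` B) (S l0 t s ` B0) < \<epsilon>))"
proof (intro allI impI, elim conjE)
  fix s t :: real and l0 B0 and \<epsilon> :: real
  assume st: "s \<le> t" and B0: "B0 \<in> CB K" and e: "\<epsilon> > 0"
  have cont: "continuous_on {(x, t, s). s \<le> t} (\<lambda>(x, t, s). S l0 t s x)"
    using proc[of l0] unfolding process_def by blast
  have "continuous_on K (\<lambda>x. S l0 t s x)"
  proof -
    have "continuous_on K (\<lambda>x. (x,t,s))" by (intro continuous_intros)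
    moreover have "(\<lambda>x. (x,t,s)) ` K \<subseteq> {(x, t, s). s \<le> t}" using st by auto
    ultimately show ?thesis using continuous_on_compose2[OF cont, of K "\<lambda>x. (x,t,s)"] by simp
  qed
  hence "uniformly_continuous_on K (\<lambda>x. S l0 t s x)"
    using K compact_uniformly_continuous by blast
  then obtain \<eta> where eta: "\<eta> > 0"
    "\<forall>x\<in>K. \<forall>y\<in>K. dist y x < \<eta> \<longrightarrow> dist (S l0 t s y) (S l0 t s x) < \<epsilon>/4"
    unfolding uniformly_continuous_on_def using e
    by (metis divide_pos_pos zero_less_numeral)
  obtain \<delta>1 where d1: "\<delta>1 > 0"
    "\<forall>l. dist l l0 < \<delta>1 \<longrightarrow> (\<forall>x\<in>K. dist (S l t s x) (S l0 t s x) < \<epsilon>/4)"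
    using unif[OF st K, of "\<epsilon>/4" l0] e by auto
  have bK: "bounded K" using K compact_imp_bounded by blast
  show "\<exists>\<delta>>0. \<forall>l B. B \<in> CB K \<and> dist l l0 < \<delta> \<and> hDelta B B0 < \<delta> \<longrightarrow>
                  hDelta (S l t s ` B) (S l0 t s ` B0) < \<epsilon>"
  proof (rule exI[of _ "min \<delta>1 \<eta>"], intro conjI allI impI)
    show "min \<delta>1 \<eta> > 0" using d1 eta by simp
    fix l B assume h: "B \<in> CB K \<and> dist l l0 < min \<delta>1 \<eta> \<and> hDelta B B0 < min \<delta>1 \<eta>"
    have BK: "B \<subseteq> K" "B \<noteq> {}" using h unfolding CB_def by auto
    have B0K: "B0 \<subseteq> K" "B0 \<noteq> {}" using B0 unfolding CB_def by auto
    have ll: "\<forall>x\<in>K. dist (S l t s x) (S l0 t s x) < \<epsilon>/4" using h d1 by auto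
    have r1: "hrho B B0 < \<eta>" and r2: "hrho B0 B < \<eta>"
      using h unfolding hDelta_def by auto
    have "hrho (S l t s ` B) (S l0 t s ` B0) \<le> \<epsilon>/2"
    proof (rule hrho_le)
      show "S l t s ` B \<noteq> {}" using BK by simp
      show "\<forall>a\<in>S l t s ` B. \<exists>c\<in>S l0 t s ` B0. dist a c < \<epsilon> / 2"
      proof
        fix a assume "a \<in> S l t s ` B"
        then obtain b where b: "b \<in> B" "a = S l t s b" by blast
        obtain c where c: "c \<in> B0" "dist b c < \<eta>"
          using hrho_lt[OF BK(1) B0K(1) B0K(2) bK r1 b(1)] by blast
        have "dist (S l t s b) (S l0 t s c) \<le> dist (S l t s b) (S l0 t s b) + dist (S l0 t s b) (S l0 t s c)"
          by (rule dist_triangle)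
        moreover have "dist (S l t s b) (S l0 t s b) < \<epsilon>/4" using ll b BK by auto
        moreover have "dist (S l0 t s b) (S l0 t s c) < \<epsilon>/4"
          using eta(2) b BK c B0K by (metis subsetD dist_commute)
        ultimately show "\<exists>c\<in>S l0 t s ` B0. dist a c < \<epsilon> / 2" using b c by force
      qed
    qed
    moreover have "hrho (S l0 t s ` B0) (S l t s ` B) \<le> \<epsilon>/2"
    proof (rule hrho_le)
      show "S l0 t s ` B0 \<noteq> {}" using B0K by simp
      show "\<forall>a\<in>S l0 t s ` B0. \<exists>c\<in>S l t s ` B. dist a c < \<epsilon> / 2"
      proof
        fix a assume "a \<in> S l0 t s ` B0"
        then obtain b where b: "b \<in> B0" "a = S l0 t s b" by blast
        obtain c where c: "c \<in> B" "dist b c < \<eta>"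
          using hrho_lt[OF B0K(1) BK(1) BK(2) bK r2 b(1)] by blast
        have "dist (S l0 t s b) (S l t s c) \<le> dist (S l0 t s b) (S l0 t s c) + dist (S l0 t s c) (S l t s c)"
          by (rule dist_triangle)
        moreover have "dist (S l0 t s c) (S l t s c) < \<epsilon>/4" using ll c BK by (auto simp: dist_commute)
        moreover have "dist (S l0 t s b) (S l0 t s c) < \<epsilon>/4"
          using eta(2) b BK c B0K by (metis subsetD dist_commute)
        ultimately show "\<exists>c\<in>S l t s ` B. dist a c < \<epsilon> / 2" using b c by force
      qed
    qed
    ultimately show "hDelta (S l t s ` B) (S l0 t s ` B0) < \<epsilon>"
      unfolding hDelta_def using e by linarith
  qed
qed

end
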